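(* For every integer $k\ge 2$ and every positive integer $n$, \[ t_{2k+1}(n)\le 9(k-1)\,\mathrm{ex}\!\left(\left\lceil \tfrac{n}{3}\right\rceil,\left\lceil \tfrac{n}{3}\right\rceil, C_{2k}\right). \]
   Context: All graphs are simple. For a graph $G$, $t(G)$ denotes the number of triangles ($K_3$ subgraphs) of $G$. A graph is $F$-free if it contains no (not necessarily induced) subgraph isomorphic to $F$. For $\ell\ge 3$, $t_\ell(n)$ is the maximum of $t(G)$ over all $C_\ell$-free graphs $G$ on $n$ vertices, where $C_\ell$ is the cycle of length $\ell$. $\mathrm{ex}(m,n,F)$ denotes the maximum number of edges in a bipartite graph with parts of sizes $m$ and $n$ that contains no subgraph isomorphic to $F$. *)

theory Defs
  imports Main
begin

definition simple_graph :: "'a set \<Rightarrow> 'a set set \<Rightarrow> bool" where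
  "simple_graph V E \<longleftrightarrow> E \<subseteq> {e. \<exists>x y. e = {x, y} \<and> x \<noteq> y \<and> x \<in> V \<and> y \<in> V}"

definition has_cycle :: "'a set set \<Rightarrow> nat \<Rightarrow> bool" where
  "has_cycle E l \<longleftrightarrow> (\<exists>f :: nat \<Rightarrow> 'a. inj_on f {0..<l} \<and>
      (\<forall>i<l. {f i, f ((i + 1) mod l)} \<in> E))"

definition triangles :: "'a set \<Rightarrow> 'a set set \<Rightarrow> nat" where
  "triangles V E = card {T. T \<subseteq> V \<and> card T = 3 \<and>
      (\<forall>x\<in>T. \<forall>y\<in>T. x \<noteq> y \<longrightarrow> {x, y} \<in> E)}"

text \<open>t_l(n): max number of triangles in a C_l-free graph on n vertices
  (vertex set {0..<n}, w.l.o.g. up to isomorphism).\<close>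
definition t_cyc :: "nat \<Rightarrow> nat \<Rightarrow> nat" where
  "t_cyc l n = Max {triangles {0..<n} E | E. simple_graph {0..<n} E \<and> \<not> has_cycle E l}"

text \<open>The bipartite graph with parts {Inl i | i<m} and {Inr j | j<n} and edge set B.\<close>
definition bip_graph :: "(nat \<times> nat) set \<Rightarrow> (nat + nat) set set" where
  "bip_graph B = {{Inl i, Inr j} | i j. (i, j) \<in> B}"

definition ex_bip_cyc :: "nat \<Rightarrow> nat \<Rightarrow> nat \<Rightarrow> nat" where
  "ex_bip_cyc m n l = Max {card B | B. B \<subseteq> {0..<m} \<times> {0..<n} \<and> \<not> has_cycle (bip_graph B) l}"

end

theory Submission
  imports Defs "HOL-Combinatorics.Permutations"
begin


definition lpath :: "('a \<times> 'a) set \<Rightarrow> 'a list \<Rightarrow> bool" where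
  "lpath L p \<longleftrightarrow> distinct p \<and> set p \<subseteq> fst ` L \<union> snd ` L \<and>
     (\<forall>i. Suc i < length p \<longrightarrow> (p!i, p!Suc i) \<in> L \<or> (p!Suc i, p!i) \<in> L)"

lemma six_choose3: "6 * (n choose 3) = n*(n-1)*(n-2)"
proof (induction n)
  case 0 then show ?case by simp
next
  case (Suc n)
  have "Suc n choose 3 = (n choose 3) + (n choose 2)"
    by (simp add: numeral_3_eq_3 numeral_2_eq_2)
  moreover have "2 * (n choose 2) = n * (n - 1)" 
    unfolding choose_two by (cases n) auto
  ultimately show ?case using Suc by (cases n; cases "n - 1"; simp add: algebra_simps)
qed

lemma lpath_mono: "L' \<subseteq> L \<Longrightarrow> lpath L' p \<Longrightarrow> lpath L p"
  unfolding lpath_def by blast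

lemma lpath_longest:
  assumes fin: "finite L" and disj: "fst ` L \<inter> snd ` L = {}" and ne: "L \<noteq> {}"
    and deg: "\<forall>u\<in>fst ` L \<union> snd ` L. k \<le> card {e\<in>L. fst e = u \<or> snd e = u}"
  shows "\<exists>p. lpath L p \<and> length p = 2*k"
proof -
  define V where "V = fst ` L \<union> snd ` L"
  have finV: "finite V" using fin by (simp add: V_def)
  define Ps where "Ps = {p. lpath L p}"
  have "Ps \<subseteq> {xs. set xs \<subseteq> V \<and> distinct xs}" unfolding Ps_def lpath_def V_def by auto
  then have finPs: "finite Ps" using finite_subset_distinct[OF finV] finite_subset by blast
  obtain u where uV: "u \<in> V" using ne unfolding V_def by fastforce
  have "[u] \<in> Ps" using uV unfolding Ps_def lpath_def V_def by auto
  then have neP: "length ` Ps \<noteq> {}" by blast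
  define M where "M = Max (length ` Ps)"
  obtain p where pP: "p \<in> Ps" and pM: "length p = M"
    using Max_in[OF finite_imageI[OF finPs] neP] unfolding M_def by auto
  have maxp: "length q \<le> length p" if "q \<in> Ps" for q
    using Max_ge[OF finite_imageI[OF finPs]] that pM unfolding M_def by auto
  have lp: "lpath L p" using pP Ps_def by simp
  have "length [u] \<le> length p" using maxp \<open>[u] \<in> Ps\<close> by blast
  then have pne: "p \<noteq> []" by auto
  define h where "h = p ! 0"
  have hV: "h \<in> V" using lp pne unfolding lpath_def h_def V_def by (auto simp: nth_mem subset_iff)
  define Nh where "Nh = {w. (h,w) \<in> L \<or> (w,h) \<in> L}"
  have NhV: "Nh \<subseteq> V" unfolding Nh_def V_def by force
  have nb: "w \<in> set p" if "w \<in> Nh" for w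
  proof (rule ccontr)
    assume wn: "w \<notin> set p"
    have "lpath L (w # p)"
      unfolding lpath_def
    proof (intro conjI allI impI)
      show "distinct (w # p)" using wn lp by (simp add: lpath_def)
      show "set (w # p) \<subseteq> fst ` L \<union> snd ` L" using lp NhV that by (auto simp: lpath_def V_def)
      fix i assume i: "Suc i < length (w # p)"
      show "((w # p) ! i, (w # p) ! Suc i) \<in> L \<or> ((w # p) ! Suc i, (w # p) ! i) \<in> L"
      proof (cases i)
        case 0 then show ?thesis using that unfolding Nh_def h_def by auto
      next
        case (Suc j) then show ?thesis using lp i unfolding lpath_def by auto
      qed
    qed
    then have "length (w # p) \<le> length p" using maxp Ps_def by blast
    then show False by simp
  qed
  have side: "(p ! i \<in> fst ` L) = (even i = (h \<in> fst ` L))" if "i < length p" for i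
    using that
  proof (induction i)
    case 0 then show ?case by (simp add: h_def)
  next
    case (Suc i)
    have "(p!i, p!Suc i) \<in> L \<or> (p!Suc i, p!i) \<in> L" using lp Suc.prems unfolding lpath_def by blast
    then have "(p ! Suc i \<in> fst ` L) = (\<not> (p ! i \<in> fst ` L))"
    proof
      assume a: "(p!i, p!Suc i) \<in> L"
      then have "p!i \<in> fst ` L" "p!Suc i \<in> snd ` L" by force+
      then show ?thesis using disj by blast
    next
      assume a: "(p!Suc i, p!i) \<in> L"
      then have "p!Suc i \<in> fst ` L" "p!i \<in> snd ` L" by force+
      then show ?thesis using disj by blast
    qed
    then show ?case using Suc by auto
  qed
  define D where "D = {e\<in>L. fst e = h \<or> snd e = h}"
  define g where "g = (\<lambda>e::'a\<times>'a. if fst e = h then snd e else fst e)"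
  have "inj_on g D"
  proof (rule inj_onI)
    fix e e' assume e: "e \<in> D" and e': "e' \<in> D" and eq: "g e = g e'"
    show "e = e'"
    proof (cases "fst e = h")
      case True
      then have "h \<in> fst ` L" using e D_def by force
      then have "snd e' \<noteq> h" using e' disj D_def by force
      then have "fst e' = h" using e' D_def by auto
      then show ?thesis using True eq g_def by (simp add: prod_eq_iff)
    next
      case False
      then have "snd e = h" using e D_def by auto
      then have "h \<in> snd ` L" using e D_def by force
      then have "fst e' \<noteq> h" using e' disj D_def by force
      then have "snd e' = h" using e' D_def by auto
      then show ?thesis using False \<open>snd e = h\<close> eq g_def by (simp add: prod_eq_iff)
    qed
  qed
  moreover have "g ` D \<subseteq> Nh" unfolding g_def D_def Nh_def by force
  moreover have "finite Nh" using NhV finV finite_subset by blast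
  ultimately have c1: "card D \<le> card Nh" using card_inj_on_le by blast
  have c2: "k \<le> card D" using deg hV unfolding V_def D_def by blast
  have "Nh \<subseteq> (\<lambda>j. p ! (2*j+1)) ` {..<length p div 2}"
  proof
    fix w assume w: "w \<in> Nh"
    then obtain i where i: "i < length p" "w = p ! i" using nb[OF w] by (auto simp: in_set_conv_nth)
    have flip: "(w \<in> fst ` L) \<noteq> (h \<in> fst ` L)"
    proof -
      have "(h,w) \<in> L \<or> (w,h) \<in> L" using w Nh_def by simp
      then show ?thesis
      proof
        assume "(h,w) \<in> L" then have "h \<in> fst ` L" "w \<in> snd ` L" by force+
        then show ?thesis using disj by blast
      next
        assume "(w,h) \<in> L" then have "w \<in> fst ` L" "h \<in> snd ` L" by force+
        then show ?thesis using disj by blast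
      qed
    qed
    have "odd i" using side[OF i(1)] flip i(2) by auto
    then obtain j where j: "i = 2*j+1" using oddE by blast
    then have "j < length p div 2" using i(1) by auto
    then show "w \<in> (\<lambda>j. p ! (2*j+1)) ` {..<length p div 2}" using i(2) j by blast
  qed
  then have "card Nh \<le> card ((\<lambda>j. p ! (2*j+1)) ` {..<length p div 2})"
    by (intro card_mono) auto
  also have "\<dots> \<le> card {..<length p div 2}" by (rule card_image_le) simp
  finally have "card Nh \<le> length p div 2" by simp
  with c1 c2 have "2*k \<le> length p" by linarith
  then have "lpath L (take (2*k) p)" "length (take (2*k) p) = 2*k"
    using lp unfolding lpath_def by (auto dest: in_set_takeD)
  then show ?thesis by blast
qed

lemma bip_bound:
  "finite L \<Longrightarrow> fst ` L \<inter> snd ` L = {} \<Longrightarrow> \<not> (\<exists>p. lpath L p \<and> length p = 2*k) \<Longrightarrow>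
   card L \<le> (k-1) * (card (fst ` L) + card (snd ` L))"
proof (induction "card (fst ` L) + card (snd ` L)" arbitrary: L rule: less_induct)
  case less
  show ?case
  proof (cases "L = {}")
    case True then show ?thesis by simp
  next
    case ne: False
    show ?thesis
    proof (cases "\<exists>u\<in>fst ` L \<union> snd ` L. card {e\<in>L. fst e = u \<or> snd e = u} < k")
      case False
      then have "\<exists>p. lpath L p \<and> length p = 2*k"
        using lpath_longest[OF less.prems(1,2) ne] by (meson not_less)
      then show ?thesis using less.prems(3) by blast
    next
      case True
      then obtain u where uV: "u \<in> fst ` L \<union> snd ` L" and du: "card {e\<in>L. fst e = u \<or> snd e = u} < k"
        by blast
      define D where "D = {e\<in>L. fst e = u \<or> snd e = u}"
      define L' where "L' = L - D"
      have finL': "finite L'" using less.prems(1) L'_def by simp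
      have s1: "fst ` L' \<subseteq> fst ` L - {u}" "snd ` L' \<subseteq> snd ` L - {u}"
        unfolding L'_def D_def by auto
      have finF: "finite (fst ` L)" "finite (snd ` L)" using less.prems(1) by auto
      have lt: "card (fst ` L') + card (snd ` L') < card (fst ` L) + card (snd ` L)"
      proof (cases "u \<in> fst ` L")
        case True
        have "card (fst ` L') \<le> card (fst ` L - {u})" using s1 finF by (intro card_mono) auto
        also have "\<dots> < card (fst ` L)" using True finF by (meson card_Diff1_less)
        finally have "card (fst ` L') < card (fst ` L)" .
        moreover have "card (snd ` L') \<le> card (snd ` L)" using finF s1 by (intro card_mono) auto
        ultimately show ?thesis by linarith
      next
        case False
        then have u2: "u \<in> snd ` L" using uV by blast
        have "card (snd ` L') \<le> card (snd ` L - {u})" using s1 finF by (intro card_mono) auto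
        also have "\<dots> < card (snd ` L)" using u2 finF by (meson card_Diff1_less)
        finally have "card (snd ` L') < card (snd ` L)" .
        moreover have "card (fst ` L') \<le> card (fst ` L)" using finF s1 by (intro card_mono) auto
        ultimately show ?thesis by linarith
      qed
      have disj': "fst ` L' \<inter> snd ` L' = {}" using less.prems(2) L'_def by auto
      have LL: "L' \<subseteq> L" unfolding L'_def by blast
      have np: "\<not> (\<exists>p. lpath L' p \<and> length p = 2*k)"
      proof
        assume "\<exists>p. lpath L' p \<and> length p = 2*k"
        then obtain p where "lpath L' p" "length p = 2*k" by blast
        then have "lpath L p" "length p = 2*k" using lpath_mono[OF LL] by auto
        then show False using less.prems(3) by blast
      qed
      have IH: "card L' \<le> (k-1) * (card (fst ` L') + card (snd ` L'))"
        using less.hyps[OF lt finL' disj' np] .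
      have DL: "D \<subseteq> L" unfolding D_def by blast
      have finD: "finite D" using DL less.prems(1) finite_subset by blast
      have "card L' = card L - card D" unfolding L'_def by (rule card_Diff_subset[OF finD DL])
      moreover have "card D \<le> card L" by (rule card_mono[OF less.prems(1) DL])
      ultimately have "card L = card L' + card D" by linarith
      also have "\<dots> \<le> (k-1) * (card (fst ` L') + card (snd ` L')) + (k-1)"
        using IH du unfolding D_def[symmetric] by linarith
      also have "\<dots> \<le> (k-1) * (card (fst ` L) + card (snd ` L))"
      proof -
        have "card (fst ` L') + card (snd ` L') + 1 \<le> card (fst ` L) + card (snd ` L)" using lt by linarith
        then have "(k-1) * (card (fst ` L') + card (snd ` L') + 1) \<le> (k-1) * (card (fst ` L) + card (snd ` L))"
          by (rule mult_le_mono2)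
        then show ?thesis by (simp add: algebra_simps)
      qed
      finally show ?thesis .
    qed
  qed
qed



definition Hb :: "nat set \<Rightarrow> nat set set \<Rightarrow> (nat\<Rightarrow>nat) \<Rightarrow> (nat\<Rightarrow>nat) \<Rightarrow> nat \<Rightarrow> nat \<Rightarrow> nat \<Rightarrow> (nat\<times>nat) set" where
"Hb S E col idx a b c = {(idx x, idx y) | x y. x\<in>S \<and> y\<in>S \<and> col x = a \<and> col y = b \<and> {x,y}\<in>E \<and>
    (\<exists>z\<in>S. col z = c \<and> {x,z}\<in>E \<and> {y,z}\<in>E)}"

lemma Hb_free:
  assumes inj: "inj_on (\<lambda>x. (col x, idx x)) S" and abc: "a \<noteq> b" "a \<noteq> c" "b \<noteq> c"
    and k: "k \<ge> 1" and nc: "\<not> has_cycle E (2*k+1)"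
  shows "\<not> has_cycle (bip_graph (Hb S E col idx a b c)) (2*k)"
proof
  let ?H = "Hb S E col idx a b c"
  assume "has_cycle (bip_graph ?H) (2*k)"
  then obtain f where finj: "inj_on f {0..<2*k}"
    and fe: "\<forall>i<2*k. {f i, f ((i + 1) mod (2*k))} \<in> bip_graph ?H"
    unfolding has_cycle_def by blast
  define g where "g = case_sum (\<lambda>i. THE x. x\<in>S \<and> col x = a \<and> idx x = i) (\<lambda>j. THE y. y\<in>S \<and> col y = b \<and> idx y = j)"
  have gl: "g (Inl (idx x)) = x" if "x \<in> S" "col x = a" for x
    unfolding g_def
  proof (simp, rule the_equality)
    show "x \<in> S \<and> col x = a \<and> idx x = idx x" using that by simp
    fix x' assume "x' \<in> S \<and> col x' = a \<and> idx x' = idx x"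
    then show "x' = x" using inj that by (auto dest: inj_onD)
  qed
  have gr: "g (Inr (idx x)) = x" if "x \<in> S" "col x = b" for x
    unfolding g_def
  proof (simp, rule the_equality)
    show "x \<in> S \<and> col x = b \<and> idx x = idx x" using that by simp
    fix x' assume "x' \<in> S \<and> col x' = b \<and> idx x' = idx x"
    then show "x' = x" using inj that by (auto dest: inj_onD)
  qed
  define P where "P u \<longleftrightarrow> (\<exists>x\<in>S. col x = a \<and> u = Inl (idx x)) \<or> (\<exists>y\<in>S. col y = b \<and> u = Inr (idx y))" for u
  have Pg: "g u \<in> S \<and> col (g u) \<noteq> c" if pu: "P u" for u
  proof -
    obtain x where "x\<in>S" "(col x = a \<and> u = Inl (idx x)) \<or> (col x = b \<and> u = Inr (idx x))"
      using pu unfolding P_def by blast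
    then show ?thesis using gl gr abc by auto
  qed
  have ginj: "u = v" if pu: "P u" and pv: "P v" and eq: "g u = g v" for u v
  proof -
    obtain x where x: "x\<in>S" "(col x = a \<and> u = Inl (idx x)) \<or> (col x = b \<and> u = Inr (idx x))"
      using pu unfolding P_def by blast
    obtain y where y: "y\<in>S" "(col y = a \<and> v = Inl (idx y)) \<or> (col y = b \<and> v = Inr (idx y))"
      using pv unfolding P_def by blast
    have gux: "g u = x" using x gl gr by auto
    have gvy: "g v = y" using y gl gr by auto
    have "x = y" using gux gvy eq by simp
    then show ?thesis using x y abc by auto
  qed
  have edge: "P u \<and> P v \<and> {g u, g v} \<in> E \<and> (\<exists>z\<in>S. col z = c \<and> {g u, z}\<in>E \<and> {g v, z}\<in>E)"
    if uv0: "{u,v} \<in> bip_graph ?H" for u v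
  proof -
    obtain i j where uv: "{u,v} = {Inl i, Inr j}" and ij: "(i,j) \<in> ?H"
      using uv0 unfolding bip_graph_def by blast
    obtain x y z where xy: "i = idx x" "j = idx y" "x\<in>S" "y\<in>S" "col x = a" "col y = b" "{x,y}\<in>E"
      and z: "z\<in>S" "col z = c" "{x,z}\<in>E" "{y,z}\<in>E"
      using ij unfolding Hb_def by blast
    have "(u = Inl i \<and> v = Inr j) \<or> (u = Inr j \<and> v = Inl i)" using uv by (auto simp: doubleton_eq_iff)
    then show ?thesis
    proof
      assume "u = Inl i \<and> v = Inr j"
      then have "g u = x" "g v = y" "P u" "P v" using xy gl gr unfolding P_def by auto
      then show ?thesis using xy z by auto
    next
      assume "u = Inr j \<and> v = Inl i"
      then have "g u = y" "g v = x" "P u" "P v" using xy gl gr unfolding P_def by auto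
      then show ?thesis using xy z by (auto simp: insert_commute)
    qed
  qed
  have Pf: "P (f i)" if "i < 2*k" for i using edge fe that by blast
  have "{f (2*k-1), f ((2*k-1+1) mod (2*k))} \<in> bip_graph ?H" using fe k by (intro fe[rule_format]) simp
  moreover have "(2*k-1+1) mod (2*k) = 0" using k by simp
  ultimately have "{f (2*k-1), f 0} \<in> bip_graph ?H" by simp
  then obtain z where z: "z\<in>S" "col z = c" "{g (f (2*k-1)), z}\<in>E" "{g (f 0), z}\<in>E"
    using edge by blast
  define h where "h i = (if i = 0 then z else g (f (i - 1)))" for i
  have "has_cycle E (2*k+1)"
    unfolding has_cycle_def
  proof (intro exI conjI allI impI)
    show "inj_on h {0..<2*k+1}"
    proof (rule inj_onI)
      fix i j assume i: "i \<in> {0..<2*k+1}" and j: "j \<in> {0..<2*k+1}" and eq: "h i = h j"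
      show "i = j"
      proof (cases "i = 0"; cases "j = 0")
        assume "i \<noteq> 0" "j \<noteq> 0"
        then have "g (f (i-1)) = g (f (j-1))" using eq h_def by simp
        then have "f (i-1) = f (j-1)" using ginj Pf i j \<open>i \<noteq> 0\<close> \<open>j \<noteq> 0\<close> by auto
        then have "i - 1 = j - 1" using finj i j \<open>i \<noteq> 0\<close> \<open>j \<noteq> 0\<close> by (auto dest: inj_onD)
        then show ?thesis using \<open>i \<noteq> 0\<close> \<open>j \<noteq> 0\<close> by simp
      next
        assume "i = 0" "j \<noteq> 0"
        then have "z = g (f (j-1))" using eq h_def by simp
        moreover have "P (f (j-1))" using Pf j \<open>j \<noteq> 0\<close> by simp
        ultimately show ?thesis using Pg z by metis
      next
        assume "i \<noteq> 0" "j = 0"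
        then have "z = g (f (i-1))" using eq h_def by simp
        moreover have "P (f (i-1))" using Pf i \<open>i \<noteq> 0\<close> by simp
        ultimately show ?thesis using Pg z by metis
      qed simp
    qed
    fix i assume i: "i < 2*k+1"
    show "{h i, h ((i + 1) mod (2*k+1))} \<in> E"
    proof (cases "i = 0")
      case True
      then have "(i + 1) mod (2*k+1) = 1" using k by simp
      then show ?thesis using True z h_def by (simp add: insert_commute)
    next
      case False
      show ?thesis
      proof (cases "i = 2*k")
        case True
        then have "(i + 1) mod (2*k+1) = 0" by simp
        then show ?thesis using True z h_def k by simp
      next
        case False2: False
        then have m: "(i + 1) mod (2*k+1) = i + 1" using i by simp
        have "i - 1 < 2*k" using i False False2 by simp
        then have "{f (i-1), f ((i - 1 + 1) mod (2*k))} \<in> bip_graph ?H" using fe by blast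
        moreover have "(i - 1 + 1) mod (2*k) = i" using i False False2 by simp
        ultimately have "{g (f (i-1)), g (f i)} \<in> E" using edge by simp
        then show ?thesis using m h_def False by simp
      qed
    qed
  qed
  then show False using nc by simp
qed



lemma card_le_ex:
  assumes "H \<subseteq> {0..<m}\<times>{0..<m}" "\<not> has_cycle (bip_graph H) l"
  shows "card H \<le> ex_bip_cyc m m l"
proof -
  let ?A = "{card B | B. B \<subseteq> {0..<m} \<times> {0..<m} \<and> \<not> has_cycle (bip_graph B) l}"
  have "?A \<subseteq> card ` Pow ({0..<m}\<times>{0..<m})" by blast
  then have "finite ?A" using finite_subset by blast
  moreover have "card H \<in> ?A" using assms by blast
  ultimately show ?thesis unfolding ex_bip_cyc_def by (rule Max_ge)
qed

lemma rainbow_bound: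
  fixes S :: "nat set" and E and col idx :: "nat \<Rightarrow> nat" and k m :: nat
  assumes fin: "finite S" and sg: "simple_graph S E" and nc: "\<not> has_cycle E (2*k+1)" and k: "k \<ge> 1"
    and inj: "inj_on (\<lambda>x. (col x, idx x)) S" and idxm: "\<forall>x\<in>S. idx x < m"
  shows "card {T. T \<subseteq> S \<and> card T = 3 \<and> (\<forall>x\<in>T. \<forall>y\<in>T. x \<noteq> y \<longrightarrow> {x,y}\<in>E) \<and> col ` T = {0,1,2}}
     \<le> 2*(k-1) * ex_bip_cyc m m (2*k)"
proof -
  define X where "X = ex_bip_cyc m m (2*k)"
  define H1 where "H1 = Hb S E col idx 0 1 2"
  define H2 where "H2 = Hb S E col idx 0 2 1"
  have H1X: "card H1 \<le> X" unfolding X_def H1_def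
    by (rule card_le_ex) (use idxm Hb_free[OF inj _ _ _ k nc] in \<open>auto simp: Hb_def\<close>)
  have H2X: "card H2 \<le> X" unfolding X_def H2_def
    by (rule card_le_ex) (use idxm Hb_free[OF inj _ _ _ k nc] in \<open>auto simp: Hb_def\<close>)
  define A0 where "A0 = {x\<in>S. col x = 0}"
  define L where "L x = {(y,z). y\<in>S \<and> z\<in>S \<and> col y = 1 \<and> col z = 2 \<and> {x,y}\<in>E \<and> {x,z}\<in>E \<and> {y,z}\<in>E}" for x
  define R where "R = {T. T \<subseteq> S \<and> card T = 3 \<and> (\<forall>x\<in>T. \<forall>y\<in>T. x \<noteq> y \<longrightarrow> {x,y}\<in>E) \<and> col ` T = {0,1,2}}"
  have finA0: "finite A0" using fin A0_def by simp
  have finL: "finite (L x)" for x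
    by (rule finite_subset[of _ "S \<times> S"]) (auto simp: L_def fin)
  have R_sub: "R \<subseteq> (\<lambda>(x,y,z). {x,y,z}) ` (SIGMA x:A0. L x)"
  proof
    fix T assume T: "T \<in> R"
    then have TS: "T \<subseteq> S" and c3: "card T = 3" and cl: "\<forall>x\<in>T. \<forall>y\<in>T. x \<noteq> y \<longrightarrow> {x,y}\<in>E"
      and ct: "col ` T = {0,1,2}" unfolding R_def by auto
    obtain x where x: "x \<in> T" "col x = 0" using ct by (metis imageE insertI1)
    obtain y where y: "y \<in> T" "col y = 1" using ct by (metis imageE insertI1 insertI2)
    obtain z where z: "z \<in> T" "col z = 2" using ct by (metis imageE insertI1 insertI2)
    have d: "x \<noteq> y" "x \<noteq> z" "y \<noteq> z" using x y z by auto
    have "{x,y,z} \<subseteq> T" using x y z by auto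
    moreover have "card {x,y,z} = 3" using d by simp
    moreover have "finite T" using c3 card_ge_0_finite by force
    ultimately have Teq: "T = {x,y,z}" using c3 by (metis card_subset_eq)
    have "x \<in> A0" using x TS A0_def by auto
    moreover have "(y,z) \<in> L x" using x y z d cl TS unfolding L_def by auto
    ultimately show "T \<in> (\<lambda>(x,y,z). {x,y,z}) ` (SIGMA x:A0. L x)" using Teq by force
  qed
  have "card R \<le> card (SIGMA x:A0. L x)"
    using card_image_le[of "SIGMA x:A0. L x" "\<lambda>(x,y,z). {x,y,z}"] card_mono[OF _ R_sub] finA0 finL
    by (meson finite_SigmaI finite_imageI le_trans)
  also have "\<dots> = (\<Sum>x\<in>A0. card (L x))" using finA0 finL by simp
  also have "\<dots> \<le> (\<Sum>x\<in>A0. (k-1) * (card (fst ` L x) + card (snd ` L x)))"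
  proof (rule sum_mono)
    fix x assume xA: "x \<in> A0"
    have nbr: "{x,w} \<in> E" if "w \<in> fst ` L x \<union> snd ` L x" for w
      using that unfolding L_def by auto
    have colw: "w \<in> S \<and> (col w = 1 \<or> col w = 2)" if "w \<in> fst ` L x \<union> snd ` L x" for w
      using that unfolding L_def by auto
    have disj: "fst ` L x \<inter> snd ` L x = {}" unfolding L_def by auto
    have np: "\<not> (\<exists>p. lpath (L x) p \<and> length p = 2*k)"
    proof
      assume "\<exists>p. lpath (L x) p \<and> length p = 2*k"
      then obtain p where lp: "lpath (L x) p" and lenp: "length p = 2*k" by blast
      have dp: "distinct p" and sp: "set p \<subseteq> fst ` L x \<union> snd ` L x"
        and adj: "\<And>i. Suc i < length p \<Longrightarrow> (p!i, p!Suc i) \<in> L x \<or> (p!Suc i, p!i) \<in> L x"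
        using lp unfolding lpath_def by auto
      have xnp: "x \<notin> set p" using sp colw xA A0_def by fastforce
      define f where "f i = (if i = 0 then x else p ! (i - 1))" for i
      have "has_cycle E (2*k+1)"
        unfolding has_cycle_def
      proof (intro exI conjI allI impI)
        show "inj_on f {0..<2*k+1}"
        proof (rule inj_onI)
          fix i j assume i: "i \<in> {0..<2*k+1}" and j: "j \<in> {0..<2*k+1}" and eq: "f i = f j"
          show "i = j"
          proof (cases "i = 0"; cases "j = 0")
            assume "i \<noteq> 0" "j \<noteq> 0"
            then have "p ! (i-1) = p ! (j-1)" using eq f_def by simp
            then have "i - 1 = j - 1" using dp i j lenp \<open>i \<noteq> 0\<close> \<open>j \<noteq> 0\<close> nth_eq_iff_index_eq by fastforce
            then show ?thesis using \<open>i \<noteq> 0\<close> \<open>j \<noteq> 0\<close> by simp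
          next
            assume "i = 0" "j \<noteq> 0"
            then have "x = p ! (j-1)" using eq f_def by simp
            moreover have "j - 1 < length p" using j lenp \<open>j \<noteq> 0\<close> by auto
            ultimately show ?thesis using xnp nth_mem by metis
          next
            assume "i \<noteq> 0" "j = 0"
            then have "x = p ! (i-1)" using eq f_def by simp
            moreover have "i - 1 < length p" using i lenp \<open>i \<noteq> 0\<close> by auto
            ultimately show ?thesis using xnp nth_mem by metis
          qed simp
        qed
        fix i assume i: "i < 2*k+1"
        show "{f i, f ((i + 1) mod (2*k+1))} \<in> E"
        proof (cases "i = 0")
          case True
          have m1: "(i + 1) mod (2*k+1) = 1" using k True by simp
          have "p ! 0 \<in> set p" using lenp k by simp
          then have "{x, p!0} \<in> E" using nbr sp by blast
          then show ?thesis using True f_def m1 by simp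
        next
          case False
          show ?thesis
          proof (cases "i = 2*k")
            case True
            then have m0: "(i + 1) mod (2*k+1) = 0" by simp
            have "p ! (2*k-1) \<in> set p" using lenp k by simp
            then have "{x, p!(2*k-1)} \<in> E" using nbr sp by blast
            then show ?thesis using True f_def m0 k by (simp add: insert_commute)
          next
            case False2: False
            then have m: "(i + 1) mod (2*k+1) = i + 1" using i by simp
            have "Suc (i-1) < length p" using i False False2 lenp by simp
            then have "(p!(i-1), p!Suc (i-1)) \<in> L x \<or> (p!Suc (i-1), p!(i-1)) \<in> L x" by (rule adj)
            then have "{p!(i-1), p!Suc (i-1)} \<in> E" unfolding L_def by (auto simp: insert_commute)
            then show ?thesis using m f_def False by simp
          qed
        qed
      qed
      then show False using nc by simp
    qed
    show "card (L x) \<le> (k-1) * (card (fst ` L x) + card (snd ` L x))"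
      by (rule bip_bound[OF finL disj np])
  qed
  also have "\<dots> = (k-1) * ((\<Sum>x\<in>A0. card (fst ` L x)) + (\<Sum>x\<in>A0. card (snd ` L x)))"
    by (simp only: sum_distrib_left[symmetric] sum.distrib)
  also have "\<dots> \<le> (k-1) * (card H1 + card H2)"
  proof -
    have injA: "inj_on idx {x\<in>S. col x = j}" for j
      using inj by (auto simp: inj_on_def)
    have s1: "(\<Sum>x\<in>A0. card (fst ` L x)) \<le> card H1"
    proof -
      have "(\<Sum>x\<in>A0. card (fst ` L x)) = card (SIGMA x:A0. fst ` L x)" using finA0 finL by simp
      also have "\<dots> \<le> card H1"
      proof (rule card_inj_on_le)
        show "inj_on (\<lambda>(x,y). (idx x, idx y)) (SIGMA x:A0. fst ` L x)"
        proof (rule inj_onI)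
          fix u v assume u: "u \<in> (SIGMA x:A0. fst ` L x)" and v: "v \<in> (SIGMA x:A0. fst ` L x)"
            and e0: "(\<lambda>(x,y). (idx x, idx y)) u = (\<lambda>(x,y). (idx x, idx y)) v"
          obtain x y where uxy: "u = (x,y)" by fastforce
          obtain x' y' where vxy: "v = (x',y')" by fastforce
          have a: "x \<in> A0" "y \<in> fst ` L x" "x' \<in> A0" "y' \<in> fst ` L x'" using u v uxy vxy by auto
          have e: "idx x = idx x'" "idx y = idx y'" using e0 uxy vxy by auto
          have "x = x'" using inj_onD[OF injA[of 0] e(1)] a unfolding A0_def by auto
          moreover have "y = y'" using inj_onD[OF injA[of 1] e(2)] a unfolding L_def by auto
          ultimately show "u = v" using uxy vxy by simp
        qed
        show "(\<lambda>(x,y). (idx x, idx y)) ` (SIGMA x:A0. fst ` L x) \<subseteq> H1"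
        proof
          fix w assume "w \<in> (\<lambda>(x,y). (idx x, idx y)) ` (SIGMA x:A0. fst ` L x)"
          then obtain x y z where a: "x \<in> A0" "(y,z) \<in> L x" "w = (idx x, idx y)" by force
          then show "w \<in> H1" unfolding A0_def L_def H1_def Hb_def by blast
        qed
        show "finite H1"
          by (rule finite_subset[of _ "{0..<m}\<times>{0..<m}"]) (use idxm in \<open>auto simp: H1_def Hb_def\<close>)
      qed
      finally show ?thesis .
    qed
    have s2: "(\<Sum>x\<in>A0. card (snd ` L x)) \<le> card H2"
    proof -
      have "(\<Sum>x\<in>A0. card (snd ` L x)) = card (SIGMA x:A0. snd ` L x)" using finA0 finL by simp
      also have "\<dots> \<le> card H2"
      proof (rule card_inj_on_le)
        show "inj_on (\<lambda>(x,y). (idx x, idx y)) (SIGMA x:A0. snd ` L x)"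
        proof (rule inj_onI)
          fix u v assume u: "u \<in> (SIGMA x:A0. snd ` L x)" and v: "v \<in> (SIGMA x:A0. snd ` L x)"
            and e0: "(\<lambda>(x,y). (idx x, idx y)) u = (\<lambda>(x,y). (idx x, idx y)) v"
          obtain x y where uxy: "u = (x,y)" by fastforce
          obtain x' y' where vxy: "v = (x',y')" by fastforce
          have a: "x \<in> A0" "y \<in> snd ` L x" "x' \<in> A0" "y' \<in> snd ` L x'" using u v uxy vxy by auto
          have e: "idx x = idx x'" "idx y = idx y'" using e0 uxy vxy by auto
          have "x = x'" using inj_onD[OF injA[of 0] e(1)] a unfolding A0_def by auto
          moreover have "y = y'" using inj_onD[OF injA[of 2] e(2)] a unfolding L_def by auto
          ultimately show "u = v" using uxy vxy by simp
        qed
        show "(\<lambda>(x,y). (idx x, idx y)) ` (SIGMA x:A0. snd ` L x) \<subseteq> H2"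
        proof
          fix w assume "w \<in> (\<lambda>(x,y). (idx x, idx y)) ` (SIGMA x:A0. snd ` L x)"
          then obtain x y z where a: "x \<in> A0" "(y,z) \<in> L x" "w = (idx x, idx z)" by force
          then have "x \<in> S" "col x = 0" "y \<in> S" "col y = 1" "z \<in> S" "col z = 2"
            "{x,y} \<in> E" "{x,z} \<in> E" "{z,y} \<in> E" unfolding A0_def L_def by (auto simp: insert_commute)
          then show "w \<in> H2" unfolding H2_def Hb_def using a(3) by blast
        qed
        show "finite H2"
          by (rule finite_subset[of _ "{0..<m}\<times>{0..<m}"]) (use idxm in \<open>auto simp: H2_def Hb_def\<close>)
      qed
      finally show ?thesis .
    qed
    show ?thesis using s1 s2 by (intro mult_le_mono2) simp
  qed
  also have "\<dots> \<le> 2*(k-1) * X" using H1X H2X by simp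
  finally show ?thesis unfolding R_def X_def .
qed



lemma card_filter_sum: "finite A \<Longrightarrow> card {x\<in>A. Q x} = (\<Sum>x\<in>A. if Q x then 1 else (0::nat))"
  by (simp add: sum.inter_filter[symmetric])

lemma count_swap:
  assumes "finite A" "finite B"
  shows "(\<Sum>a\<in>A. card {b\<in>B. Q a b}) = (\<Sum>b\<in>B. card {a\<in>A. Q a b})"
  using assms by (simp add: card_filter_sum sum.swap[of _ A B])

lemma perm_exists:
  assumes fin: "finite S" and T: "T \<subseteq> S" and T': "T' \<subseteq> S" and c: "card T = card T'"
  shows "\<exists>\<tau>. \<tau> permutes S \<and> \<tau> ` T' = T"
proof -
  have finT: "finite T" "finite T'" using fin T T' finite_subset by auto
  obtain g where g: "bij_betw g T' T" using finite_same_card_bij[OF finT(2) finT(1) c[symmetric]] by blast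
  have "card (S - T') = card (S - T)" using c T T' finT fin by (simp add: card_Diff_subset)
  then obtain h where h: "bij_betw h (S - T') (S - T)"
    using finite_same_card_bij[of "S - T'" "S - T"] finite_Diff[OF fin] by blast
  define \<tau> where "\<tau> x = (if x \<in> T' then g x else if x \<in> S then h x else x)" for x
  have b1: "bij_betw \<tau> T' T"
  proof -
    have "bij_betw g T' T = bij_betw \<tau> T' T" by (rule bij_betw_cong) (simp add: \<tau>_def)
    then show ?thesis using g by simp
  qed
  have b2: "bij_betw \<tau> (S - T') (S - T)"
  proof -
    have "bij_betw h (S - T') (S - T) = bij_betw \<tau> (S - T') (S - T)" by (rule bij_betw_cong) (simp add: \<tau>_def)
    then show ?thesis using h by simp
  qed
  have "bij_betw \<tau> (T' \<union> (S - T')) (T \<union> (S - T))" by (rule bij_betw_combine[OF b1 b2]) auto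
  moreover have "T' \<union> (S - T') = S" "T \<union> (S - T) = S" using T T' by auto
  ultimately have bS: "bij_betw \<tau> S S" by simp
  have fx: "\<tau> x = x" if "x \<notin> S" for x
  proof -
    have "x \<notin> T'" using that T' by blast
    then show ?thesis using that by (simp add: \<tau>_def)
  qed
  have "\<tau> permutes S" using bij_imp_permutes[OF bS fx] .
  moreover have "\<tau> ` T' = T" using b1 by (simp add: bij_betw_def)
  ultimately show ?thesis by blast
qed

definition cnd :: "(nat \<Rightarrow> nat) \<Rightarrow> nat set \<Rightarrow> bool" where
  "cnd \<sigma> T \<longleftrightarrow> (\<lambda>x. \<sigma> x mod 3) ` T = {0,1,2}"

lemma c_const:
  assumes fin: "finite S" and T: "T \<subseteq> S" "card T = 3" and T': "T' \<subseteq> S" "card T' = 3"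
  shows "card {\<sigma>. \<sigma> permutes S \<and> cnd \<sigma> T} = card {\<sigma>. \<sigma> permutes S \<and> cnd \<sigma> T'}"
proof -
  obtain \<tau> where tp: "\<tau> permutes S" and tT: "\<tau> ` T' = T" using perm_exists[OF fin T(1) T'(1)] T T' by auto
  have io: "\<tau> \<circ> inv \<tau> = id" "inv \<tau> \<circ> \<tau> = id" using permutes_inv_o[OF tp] by auto
  have ip: "inv \<tau> permutes S" using permutes_inv[OF tp] .
  have "bij_betw (\<lambda>\<sigma>. \<sigma> \<circ> \<tau>) {\<sigma>. \<sigma> permutes S \<and> cnd \<sigma> T} {\<sigma>. \<sigma> permutes S \<and> cnd \<sigma> T'}"
  proof (rule bij_betw_byWitness[where f' = "\<lambda>\<sigma>. \<sigma> \<circ> inv \<tau>"])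
    show "\<forall>a\<in>{\<sigma>. \<sigma> permutes S \<and> cnd \<sigma> T}. a \<circ> \<tau> \<circ> inv \<tau> = a"
      using io by (simp add: comp_assoc)
    show "\<forall>a\<in>{\<sigma>. \<sigma> permutes S \<and> cnd \<sigma> T'}. a \<circ> inv \<tau> \<circ> \<tau> = a"
      using io by (simp add: comp_assoc)
    show "(\<lambda>\<sigma>. \<sigma> \<circ> \<tau>) ` {\<sigma>. \<sigma> permutes S \<and> cnd \<sigma> T} \<subseteq> {\<sigma>. \<sigma> permutes S \<and> cnd \<sigma> T'}"
    proof clarify
      fix \<sigma> assume "\<sigma> permutes S" "cnd \<sigma> T"
      moreover have "(\<lambda>x. (\<sigma> \<circ> \<tau>) x mod 3) ` T' = (\<lambda>x. \<sigma> x mod 3) ` (\<tau> ` T')"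
        by (simp add: image_image)
      then have "(\<lambda>x. (\<sigma> \<circ> \<tau>) x mod 3) ` T' = (\<lambda>x. \<sigma> x mod 3) ` T" using tT by simp
      ultimately show "\<sigma> \<circ> \<tau> permutes S \<and> cnd (\<sigma> \<circ> \<tau>) T'"
        using permutes_compose[OF tp] unfolding cnd_def by simp
    qed
    show "(\<lambda>\<sigma>. \<sigma> \<circ> inv \<tau>) ` {\<sigma>. \<sigma> permutes S \<and> cnd \<sigma> T'} \<subseteq> {\<sigma>. \<sigma> permutes S \<and> cnd \<sigma> T}"
    proof clarify
      fix \<sigma> assume "\<sigma> permutes S" "cnd \<sigma> T'"
      moreover have "inv \<tau> ` T = T'" unfolding tT[symmetric] by (simp add: image_comp io)
      moreover have "(\<lambda>x. (\<sigma> \<circ> inv \<tau>) x mod 3) ` T = (\<lambda>x. \<sigma> x mod 3) ` (inv \<tau> ` T)"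
        by (auto simp: image_image)
      ultimately show "\<sigma> \<circ> inv \<tau> permutes S \<and> cnd (\<sigma> \<circ> inv \<tau>) T"
        using permutes_compose[OF ip] unfolding cnd_def by simp
    qed
  qed
  then show ?thesis by (rule bij_betw_same_card)
qed

lemma rb_count:
  assumes fin: "finite S" and sp: "\<sigma> permutes S"
  shows "card {T. (T \<subseteq> S \<and> card T = 3) \<and> cnd \<sigma> T} = card {U. (U \<subseteq> S \<and> card U = 3) \<and> cnd id U}"
proof -
  have io: "\<sigma> \<circ> inv \<sigma> = id" "inv \<sigma> \<circ> \<sigma> = id" using permutes_inv_o[OF sp] by auto
  have ip: "inv \<sigma> permutes S" using permutes_inv[OF sp] .
  have ii: "inv \<sigma> ` \<sigma> ` A = A" "\<sigma> ` inv \<sigma> ` A = A" for A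
    by (simp_all add: image_comp io)
  have "bij_betw ((`) \<sigma>) {T. (T \<subseteq> S \<and> card T = 3) \<and> cnd \<sigma> T} {U. (U \<subseteq> S \<and> card U = 3) \<and> cnd id U}"
  proof (rule bij_betw_byWitness[where f' = "(`) (inv \<sigma>)"])
    show "\<forall>a\<in>{T. (T \<subseteq> S \<and> card T = 3) \<and> cnd \<sigma> T}. inv \<sigma> ` \<sigma> ` a = a" using ii by simp
    show "\<forall>a\<in>{U. (U \<subseteq> S \<and> card U = 3) \<and> cnd id U}. \<sigma> ` inv \<sigma> ` a = a" using ii by simp
    show "(`) \<sigma> ` {T. (T \<subseteq> S \<and> card T = 3) \<and> cnd \<sigma> T} \<subseteq> {U. (U \<subseteq> S \<and> card U = 3) \<and> cnd id U}"
    proof clarify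
      fix T assume "T \<subseteq> S" "card T = 3" "cnd \<sigma> T"
      moreover have "\<sigma> ` T \<subseteq> S" using \<open>T \<subseteq> S\<close> permutes_image[OF sp] by blast
      moreover have "card (\<sigma> ` T) = card T" using permutes_inj[OF sp] by (simp add: card_image inj_on_subset)
      ultimately show "(\<sigma> ` T \<subseteq> S \<and> card (\<sigma> ` T) = 3) \<and> cnd id (\<sigma> ` T)"
        unfolding cnd_def by (simp add: image_image)
    qed
    show "(`) (inv \<sigma>) ` {U. (U \<subseteq> S \<and> card U = 3) \<and> cnd id U} \<subseteq> {T. (T \<subseteq> S \<and> card T = 3) \<and> cnd \<sigma> T}"
    proof clarify
      fix U assume "U \<subseteq> S" "card U = 3" "cnd id U"
      moreover have "inv \<sigma> ` U \<subseteq> S" using \<open>U \<subseteq> S\<close> permutes_image[OF ip] by blast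
      moreover have "card (inv \<sigma> ` U) = card U" using permutes_inj[OF ip] by (simp add: card_image inj_on_subset)
      moreover have "(\<lambda>x. \<sigma> x mod 3) ` (inv \<sigma> ` U) = (\<lambda>x. x mod 3) ` (\<sigma> ` inv \<sigma> ` U)"
        by (simp add: image_image)
      then have "(\<lambda>x. \<sigma> x mod 3) ` (inv \<sigma> ` U) = (\<lambda>x. x mod 3) ` U" using ii[of U] by simp
      ultimately show "(inv \<sigma> ` U \<subseteq> S \<and> card (inv \<sigma> ` U) = 3) \<and> cnd \<sigma> (inv \<sigma> ` U)"
        unfolding cnd_def by simp
    qed
  qed
  then show ?thesis by (rule bij_betw_same_card)
qed



lemma averaging:
  assumes fin: "finite S" and FK: "F \<subseteq> {T. T \<subseteq> S \<and> card T = 3}"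
    and bnd: "\<And>\<sigma>. \<sigma> permutes S \<Longrightarrow> card {T\<in>F. cnd \<sigma> T} \<le> B"
  shows "card F * card {U. (U \<subseteq> S \<and> card U = 3) \<and> cnd id U} \<le> B * card {T. T \<subseteq> S \<and> card T = 3}"
proof -
  define P where "P = {\<sigma>. \<sigma> permutes S}"
  define K where "K = {T. T \<subseteq> S \<and> card T = 3}"
  define rbc where "rbc = card {U. (U \<subseteq> S \<and> card U = 3) \<and> cnd id U}"
  have finP: "finite P" unfolding P_def using finite_permutations[OF fin] .
  have "id \<in> P" unfolding P_def by simp
  then have Ppos: "card P > 0" using finP card_gt_0_iff by blast
  have finK: "finite K" unfolding K_def by (rule finite_subset[of _ "Pow S"]) (auto simp: fin)
  have finF: "finite F" using FK finK K_def finite_subset by blast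
  show ?thesis
  proof (cases "K = {}")
    case True
    then have "F = {}" using FK K_def by blast
    then show ?thesis by simp
  next
    case False
    then obtain T0 where T0: "T0 \<in> K" by blast
    define c0 where "c0 = card {\<sigma>. \<sigma> permutes S \<and> cnd \<sigma> T0}"
    have cc: "card {\<sigma>\<in>P. cnd \<sigma> T} = c0" if "T \<in> K" for T
      using c_const[OF fin, of T T0] that T0 unfolding K_def P_def c0_def by simp
    have "(\<Sum>\<sigma>\<in>P. card {T\<in>F. cnd \<sigma> T}) = (\<Sum>T\<in>F. card {\<sigma>\<in>P. cnd \<sigma> T})"
      by (rule count_swap[OF finP finF])
    also have "\<dots> = (\<Sum>T\<in>F. c0)" using cc FK K_def by (intro sum.cong) auto
    finally have e1: "(\<Sum>\<sigma>\<in>P. card {T\<in>F. cnd \<sigma> T}) = card F * c0" by simp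
    have "(\<Sum>\<sigma>\<in>P. card {T\<in>F. cnd \<sigma> T}) \<le> (\<Sum>\<sigma>\<in>P. B)" using bnd P_def by (intro sum_mono) auto
    then have i1: "card F * c0 \<le> card P * B" using e1 by simp
    have "(\<Sum>\<sigma>\<in>P. card {T\<in>K. cnd \<sigma> T}) = (\<Sum>T\<in>K. card {\<sigma>\<in>P. cnd \<sigma> T})"
      by (rule count_swap[OF finP finK])
    also have "\<dots> = (\<Sum>T\<in>K. c0)" using cc by (intro sum.cong) auto
    finally have e2: "(\<Sum>\<sigma>\<in>P. card {T\<in>K. cnd \<sigma> T}) = card K * c0" by simp
    have "(\<Sum>\<sigma>\<in>P. card {T\<in>K. cnd \<sigma> T}) = (\<Sum>\<sigma>\<in>P. rbc)"
    proof (intro sum.cong refl)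
      fix \<sigma> assume "\<sigma> \<in> P"
      then have "\<sigma> permutes S" using P_def by simp
      from rb_count[OF fin this] show "card {T\<in>K. cnd \<sigma> T} = rbc" unfolding K_def rbc_def by simp
    qed
    then have e3: "card K * c0 = card P * rbc" using e2 by simp
    have "card F * card K * c0 \<le> card P * B * card K" using i1 by (metis mult.commute mult.left_commute mult_le_mono2)
    then have "card P * (card F * rbc) \<le> card P * (B * card K)" using e3
      by (metis mult.commute mult.left_commute)
    then have "card F * rbc \<le> B * card K" using Ppos by simp
    then show ?thesis unfolding rbc_def K_def .
  qed
qed

lemma card_res:
  assumes "j < 3"
  shows "card {x\<in>{0..<n}. x mod 3 = j} = (n + 2 - j) div 3"
proof -
  have "{x\<in>{0..<n}. x mod 3 = j} = (\<lambda>i. 3*i + j) ` {..< (n + 2 - j) div 3}"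
  proof (rule set_eqI)
    fix x
    show "x \<in> {x\<in>{0..<n}. x mod 3 = j} \<longleftrightarrow> x \<in> (\<lambda>i. 3*i + j) ` {..< (n + 2 - j) div 3}"
    proof
      assume a: "x \<in> {x\<in>{0..<n}. x mod 3 = j}"
      then have "x = 3 * (x div 3) + j" "x div 3 < (n + 2 - j) div 3" using assms by auto presburger+
      then show "x \<in> (\<lambda>i. 3*i + j) ` {..< (n + 2 - j) div 3}" by blast
    next
      assume "x \<in> (\<lambda>i. 3*i + j) ` {..< (n + 2 - j) div 3}"
      then obtain i where i: "i < (n + 2 - j) div 3" "x = 3*i + j" by blast
      then have "x < n" "x mod 3 = j" using assms by presburger+
      then show "x \<in> {x\<in>{0..<n}. x mod 3 = j}" by simp
    qed
  qed
  moreover have "inj_on (\<lambda>i. 3*i + j) {..< (n + 2 - j) div 3}" by (rule inj_onI) simp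
  ultimately show ?thesis by (simp add: card_image)
qed

lemma rbc_lower:
  "((n+2) div 3) * ((n+1) div 3) * (n div 3) \<le> card {U. (U \<subseteq> {0..<n} \<and> card U = 3) \<and> cnd id U}"
proof -
  define A where "A j = {x\<in>{0..<(n::nat)}. x mod 3 = j}" for j
  have cA: "card (A 0) = (n+2) div 3" "card (A 1) = (n+1) div 3" "card (A 2) = n div 3"
    using card_res[of 0 n] card_res[of 1 n] card_res[of 2 n] unfolding A_def by simp_all
  define g where "g = (\<lambda>(a::nat,b::nat,c::nat). {a,b,c})"
  have inj: "inj_on g (A 0 \<times> A 1 \<times> A 2)"
  proof (rule inj_onI)
    fix u v assume u: "u \<in> A 0 \<times> A 1 \<times> A 2" and v: "v \<in> A 0 \<times> A 1 \<times> A 2" and e: "g u = g v"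
    obtain a b c where uu: "u = (a,b,c)" by (cases u) auto
    obtain a' b' c' where vv: "v = (a',b',c')" by (cases v) auto
    have m: "a mod 3 = 0" "b mod 3 = 1" "c mod 3 = 2" "a' mod 3 = 0" "b' mod 3 = 1" "c' mod 3 = 2"
      using u v uu vv unfolding A_def by auto
    have e': "{a,b,c} = {a',b',c'}" using e uu vv g_def by simp
    have "a \<in> {a',b',c'}" "b \<in> {a',b',c'}" "c \<in> {a',b',c'}" using e' by (metis insertI1 insertI2)+
    then have "a = a'" "b = b'" "c = c'" using m by auto
    then show "u = v" using uu vv by simp
  qed
  have sub: "g ` (A 0 \<times> A 1 \<times> A 2) \<subseteq> {U. (U \<subseteq> {0..<n} \<and> card U = 3) \<and> cnd id U}"
  proof
    fix U assume "U \<in> g ` (A 0 \<times> A 1 \<times> A 2)"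
    then obtain a b c where abc: "a \<in> A 0" "b \<in> A 1" "c \<in> A 2" "U = {a,b,c}" unfolding g_def by auto
    have m: "a mod 3 = 0" "b mod 3 = 1" "c mod 3 = 2" "a < n" "b < n" "c < n" using abc unfolding A_def by auto
    then have d: "a \<noteq> b" "a \<noteq> c" "b \<noteq> c" by auto
    have "(\<lambda>x. id x mod 3) ` U = {0,1,2}" using abc(4) m by auto
    then show "U \<in> {U. (U \<subseteq> {0..<n} \<and> card U = 3) \<and> cnd id U}" using abc(4) m d unfolding cnd_def by auto
  qed
  have fin: "finite {U. (U \<subseteq> {0..<n} \<and> card U = 3) \<and> cnd id U}"
    by (rule finite_subset[of _ "Pow {0..<n}"]) auto
  have "card (A 0 \<times> A 1 \<times> A 2) \<le> card {U. (U \<subseteq> {0..<n} \<and> card U = 3) \<and> cnd id U}"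
    using card_inj_on_le[OF inj sub fin] .
  moreover have "card (A 0 \<times> A 1 \<times> A 2) = ((n+2) div 3) * ((n+1) div 3) * (n div 3)"
    using cA by (simp add: card_cartesian_product)
  ultimately show ?thesis by simp
qed

lemma prod_bound: "(n::nat)*(n-1)*(n-2) \<le> 27 * (((n+2) div 3) * ((n+1) div 3) * (n div 3))"
proof -
  have a: "n \<le> 3 * ((n+2) div 3)" "n - 1 \<le> 3 * ((n+1) div 3)" "n - 2 \<le> 3 * (n div 3)" by presburger+
  have "n*(n-1)*(n-2) \<le> (3 * ((n+2) div 3)) * (3 * ((n+1) div 3)) * (3 * (n div 3))"
    using a by (intro mult_le_mono) auto
  then show ?thesis by (simp add: algebra_simps)
qed



lemma div3_less: "(a::nat) < n \<Longrightarrow> a div 3 < (n + 2) div 3" by presburger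

theorem theorem1:
  fixes k n :: nat
  assumes "k \<ge> 2" and "n \<ge> 1"
  shows "t_cyc (2 * k + 1) n \<le> 9 * (k - 1) * ex_bip_cyc ((n + 2) div 3) ((n + 2) div 3) (2 * k)"
proof -
  define S where "S = {0..<n}"
  define m where "m = (n + 2) div 3"
  define X where "X = ex_bip_cyc m m (2 * k)"
  have k1: "k \<ge> 1" using assms by simp
  have finS: "finite S" unfolding S_def by simp
  have each: "triangles S E \<le> 9 * (k - 1) * X" if sg: "simple_graph S E" and nc: "\<not> has_cycle E (2*k+1)" for E
  proof -
    define F where "F = {T. T \<subseteq> S \<and> card T = 3 \<and> (\<forall>x\<in>T. \<forall>y\<in>T. x \<noteq> y \<longrightarrow> {x,y}\<in>E)}"
    define K where "K = {T. T \<subseteq> S \<and> card T = 3}"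
    define rbc where "rbc = card {U. (U \<subseteq> S \<and> card U = 3) \<and> cnd id U}"
    have tF: "triangles S E = card F" unfolding triangles_def F_def ..
    have FK: "F \<subseteq> K" unfolding F_def K_def by blast
    have finK: "finite K" unfolding K_def by (rule finite_subset[of _ "Pow S"]) (auto simp: finS)
    have bnd: "card {T\<in>F. cnd \<sigma> T} \<le> 2*(k-1) * X" if sp: "\<sigma> permutes S" for \<sigma>
    proof -
      have inj: "inj_on (\<lambda>x. (\<sigma> x mod 3, \<sigma> x div 3)) S"
      proof (rule inj_onI)
        fix x y assume "(\<sigma> x mod 3, \<sigma> x div 3) = (\<sigma> y mod 3, \<sigma> y div 3)"
        then have "\<sigma> x = \<sigma> y" by (metis div_mult_mod_eq prod.inject)
        then show "x = y" using permutes_inj[OF sp] by (simp add: inj_eq)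
      qed
      have idxm: "\<forall>x\<in>S. \<sigma> x div 3 < m"
      proof
        fix x assume "x \<in> S"
        then have "\<sigma> x \<in> S" using permutes_in_image[OF sp] by simp
        then show "\<sigma> x div 3 < m" unfolding S_def m_def using div3_less by simp
      qed
      have eq: "{T\<in>F. cnd \<sigma> T} = {T. T \<subseteq> S \<and> card T = 3 \<and> (\<forall>x\<in>T. \<forall>y\<in>T. x \<noteq> y \<longrightarrow> {x,y}\<in>E) \<and>
                 (\<lambda>x. \<sigma> x mod 3) ` T = {0,1,2}}"
        unfolding F_def cnd_def by simp
      show ?thesis unfolding eq X_def using rainbow_bound[OF finS sg nc k1 inj idxm] .
    qed
    have avg: "card F * rbc \<le> 2*(k-1)*X * card K"
      using averaging[OF finS FK[unfolded K_def] bnd] unfolding rbc_def K_def .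
    have cK: "card K = n choose 3" unfolding K_def using n_subsets[OF finS] S_def by simp
    have r1: "((n+2) div 3) * ((n+1) div 3) * (n div 3) \<le> rbc" unfolding rbc_def S_def by (rule rbc_lower)
    have r2: "6 * card K \<le> 27 * rbc" using prod_bound[of n] six_choose3[of n] r1 cK by linarith
    show ?thesis
    proof (cases "card K = 0")
      case True
      then have "card F = 0" using card_mono[OF finK FK] by simp
      then show ?thesis using tF by simp
    next
      case False
      have "card F * (6 * card K) \<le> card F * (27 * rbc)" using r2 by (rule mult_le_mono2)
      also have "\<dots> = 27 * (card F * rbc)" by simp
      also have "\<dots> \<le> 27 * (2*(k-1)*X * card K)" using avg by (rule mult_le_mono2)
      finally have "(card F * 6) * card K \<le> (54 * ((k-1)*X)) * card K" by (simp add: algebra_simps)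
      then have "card F * 6 \<le> 54 * ((k-1)*X)" using False by simp
      then show ?thesis using tF by (simp add: algebra_simps)
    qed
  qed
  let ?A = "{triangles {0..<n} E | E. simple_graph {0..<n} E \<and> \<not> has_cycle E (2 * k + 1)}"
  have finA: "finite ?A"
  proof (rule finite_subset[of _ "{..card (Pow {0..<n})}"])
    show "?A \<subseteq> {..card (Pow {0..<n})}"
    proof
      fix a assume "a \<in> ?A"
      then obtain E where "a = triangles {0..<n} E" by blast
      moreover have "triangles {0..<n} E \<le> card (Pow {0..<n})"
        unfolding triangles_def by (rule card_mono) auto
      ultimately show "a \<in> {..card (Pow {0..<n})}" by simp
    qed
  qed simp
  have "simple_graph {0..<n} {}" unfolding simple_graph_def by simp
  moreover have "\<not> has_cycle ({}::nat set set) (2*k+1)" unfolding has_cycle_def by auto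
  ultimately have neA: "?A \<noteq> {}" by blast
  have "Max ?A \<le> 9 * (k - 1) * X"
  proof (rule Max.boundedI[OF finA neA])
    fix a assume "a \<in> ?A"
    then obtain E where "a = triangles {0..<n} E" "simple_graph {0..<n} E" "\<not> has_cycle E (2*k+1)" by blast
    then show "a \<le> 9 * (k - 1) * X" using each S_def by simp
  qed
  then show ?thesis unfolding t_cyc_def X_def m_def .
qed


end
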